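(* Let $p\geq 1$, let $\Omega$ be a set with the discrete topology, and let $\varphi=(\varphi_j)_{j\in\Omega}$ be a family of real numbers with $\varphi_j\geq 1$ for all $j\in\Omega$. Let $\mu_\varphi:=\sum_{j\in\Omega}\varphi_j\,\delta_j$, where $\delta_j$ is the point-mass measure at $j$. Then for each $g\in L^p(\Omega,\mu_\varphi)$, the set $$\Gamma_g:=\big\{f\in L^p(\Omega,\mu_\varphi):\ |f|\geq |g|\big\}$$ is not $\sigma$-porous in $L^p(\Omega,\mu_\varphi)$.
   Context: Porosity: Let $X$ be a metric space and $0<\lambda<1$. A set $E\subseteq X$ is $\lambda$-porous at $x\in E$ if for each $\delta>0$ there is $y\in B(x;\delta)\setminus\{x\}$ with $B(y;\lambda\, d(x,y))\cap E=\varnothing$; $E$ is $\lambda$-porous if it is $\lambda$-porous at each of its points; $E$ is $\sigma$-$\lambda$-porous if it is a countable union of $\lambda$-porous subsets of $X$. A set is called $\sigma$-porous if it is $\sigma$-$\lambda$-porous for some $\lambda\in(0,1)$; "not $\sigma$-porous" means not $\sigma$-$\lambda$-porous for any $\lambda\in(0,1)$. *)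

theory Defs
  imports "HOL-Analysis.Analysis"
begin

definition porous_at :: "'b set \<Rightarrow> ('b \<Rightarrow> 'b \<Rightarrow> real) \<Rightarrow> real \<Rightarrow> 'b set \<Rightarrow> 'b \<Rightarrow> bool" where
  "porous_at X d lam E x \<longleftrightarrow>
     (\<forall>\<delta>>0. \<exists>y\<in>X. d x y < \<delta> \<and> y \<noteq> x \<and>
        (\<forall>z\<in>X. d y z < lam * d x y \<longrightarrow> z \<notin> E))"

definition porous :: "'b set \<Rightarrow> ('b \<Rightarrow> 'b \<Rightarrow> real) \<Rightarrow> real \<Rightarrow> 'b set \<Rightarrow> bool" where
  "porous X d lam E \<longleftrightarrow> E \<subseteq> X \<and> (\<forall>x\<in>E. porous_at X d lam E x)"

definition sigma_porous :: "'b set \<Rightarrow> ('b \<Rightarrow> 'b \<Rightarrow> real) \<Rightarrow> real \<Rightarrow> 'b set \<Rightarrow> bool" where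
  "sigma_porous X d lam E \<longleftrightarrow>
     (\<exists>A :: nat \<Rightarrow> 'b set. E = (\<Union>n. A n) \<and> (\<forall>n. porous X d lam (A n)))"

text \<open>L^p(Omega, mu_phi) with mu_phi = sum of phi_j delta_j (discrete space, each point has
  positive mass, so a.e.-classes are just functions on Omega; we represent them as
  real functions vanishing outside Omega).\<close>

definition lp_space :: "'a set \<Rightarrow> ('a \<Rightarrow> real) \<Rightarrow> real \<Rightarrow> ('a \<Rightarrow> real) set" where
  "lp_space \<Omega> \<phi> p = {f. (\<forall>j. j \<notin> \<Omega> \<longrightarrow> f j = 0) \<and>
                          (\<lambda>j. \<phi> j * \<bar>f j\<bar> powr p) summable_on \<Omega>}"

definition lp_dist :: "'a set \<Rightarrow> ('a \<Rightarrow> real) \<Rightarrow> real \<Rightarrow> ('a \<Rightarrow> real) \<Rightarrow> ('a \<Rightarrow> real) \<Rightarrow> real" where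
  "lp_dist \<Omega> \<phi> p f g = (infsum (\<lambda>j. \<phi> j * \<bar>f j - g j\<bar> powr p) \<Omega>) powr (1 / p)"

end

theory Submission
  imports Defs
begin

lemma powr_sum_le:
  fixes a b p :: real
  assumes "0 \<le> p"
  shows "\<bar>a + b\<bar> powr p \<le> 2 powr p * (\<bar>a\<bar> powr p + \<bar>b\<bar> powr p)"
proof -
  define M where "M = max \<bar>a\<bar> \<bar>b\<bar>"
  have "\<bar>a + b\<bar> \<le> 2 * M" unfolding M_def by linarith
  hence "\<bar>a + b\<bar> powr p \<le> (2 * M) powr p" by (intro powr_mono2) (use assms in auto)
  also have "\<dots> = 2 powr p * M powr p" by (subst powr_mult) (auto simp: M_def)
  also have "M powr p \<le> \<bar>a\<bar> powr p + \<bar>b\<bar> powr p"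
    unfolding M_def by (cases "\<bar>a\<bar> \<le> \<bar>b\<bar>") (auto simp: max_def)
  hence "2 powr p * M powr p \<le> 2 powr p * (\<bar>a\<bar> powr p + \<bar>b\<bar> powr p)"
    by (intro mult_left_mono) auto
  finally show ?thesis .
qed

lemma powr_less_iff2:
  fixes x y a :: real
  assumes "0 < a" "0 \<le> x" "0 \<le> y"
  shows "x powr a < y powr a \<longleftrightarrow> x < y"
  using assms by (metis not_less powr_less_mono2 powr_mono2 less_imp_le)

locale LP =
  fixes Om :: "'a set" and phi :: "'a \<Rightarrow> real" and p :: real
  assumes p1: "1 \<le> p" and phi1: "\<forall>j\<in>Om. 1 \<le> phi j"
begin

abbreviation X where "X \<equiv> lp_space Om phi p"

definition D where "D f g = infsum (\<lambda>j. phi j * \<bar>f j - g j\<bar> powr p) Om"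

definition CC where "CC h = {f \<in> X. \<forall>j\<in>Om. h j \<le> \<bar>f j\<bar>}"

lemma p0: "0 < p" using p1 by simp

lemma phi0: "j \<in> Om \<Longrightarrow> 0 < phi j" using phi1 by force

lemma term_nonneg: "j \<in> Om \<Longrightarrow> 0 \<le> phi j * t powr p"
  using phi0[of j] by simp

lemma memX: "f \<in> X \<longleftrightarrow> (\<forall>j. j \<notin> Om \<longrightarrow> f j = 0) \<and> (\<lambda>j. phi j * \<bar>f j\<bar> powr p) summable_on Om"
  unfolding lp_space_def by simp

lemma summ_diff:
  assumes "f \<in> X" "g \<in> X"
  shows "(\<lambda>j. phi j * \<bar>f j - g j\<bar> powr p) summable_on Om"
proof (rule summable_on_comparison_test)
  show "(\<lambda>j. 2 powr p * (phi j * \<bar>f j\<bar> powr p) + 2 powr p * (phi j * \<bar>g j\<bar> powr p)) summable_on Om"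
    using assms by (intro summable_on_add summable_on_cmult_right) (auto simp: memX)
next
  fix j assume j: "j \<in> Om"
  have "\<bar>f j - g j\<bar> powr p \<le> 2 powr p * (\<bar>f j\<bar> powr p + \<bar>- g j\<bar> powr p)"
    using powr_sum_le[of p "f j" "- g j"] p0 by simp
  hence "phi j * \<bar>f j - g j\<bar> powr p \<le> phi j * (2 powr p * (\<bar>f j\<bar> powr p + \<bar>g j\<bar> powr p))"
    using phi0[OF j] by (intro mult_left_mono) auto
  thus "phi j * \<bar>f j - g j\<bar> powr p \<le> 2 powr p * (phi j * \<bar>f j\<bar> powr p) + 2 powr p * (phi j * \<bar>g j\<bar> powr p)"
    by (simp add: algebra_simps)
  show "0 \<le> phi j * \<bar>f j - g j\<bar> powr p" using phi0[OF j] by simp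
qed

lemma D_nonneg: "0 \<le> D f g"
  unfolding D_def by (rule infsum_nonneg) (rule term_nonneg)

lemma D_sym: "D f g = D g f"
  unfolding D_def by (simp add: abs_minus_commute)

lemma D_self: "D f f = 0"
  unfolding D_def by simp

lemma D_quasi:
  assumes "f \<in> X" "g \<in> X" "k \<in> X"
  shows "D f k \<le> 2 powr p * (D f g + D g k)"
proof -
  have "D f k \<le> infsum (\<lambda>j. 2 powr p * (phi j * \<bar>f j - g j\<bar> powr p) + 2 powr p * (phi j * \<bar>g j - k j\<bar> powr p)) Om"
    unfolding D_def
  proof (rule infsum_mono)
    show "(\<lambda>j. phi j * \<bar>f j - k j\<bar> powr p) summable_on Om" using summ_diff assms by auto
    show "(\<lambda>j. 2 powr p * (phi j * \<bar>f j - g j\<bar> powr p) + 2 powr p * (phi j * \<bar>g j - k j\<bar> powr p)) summable_on Om"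
      using summ_diff assms by (intro summable_on_add summable_on_cmult_right) auto
    fix j assume j: "j \<in> Om"
    have "\<bar>(f j - g j) + (g j - k j)\<bar> powr p \<le> 2 powr p * (\<bar>f j - g j\<bar> powr p + \<bar>g j - k j\<bar> powr p)"
      using powr_sum_le[of p "f j - g j" "g j - k j"] p0 by simp
    hence "phi j * \<bar>f j - k j\<bar> powr p \<le> phi j * (2 powr p * (\<bar>f j - g j\<bar> powr p + \<bar>g j - k j\<bar> powr p))"
      using phi0[OF j] by (intro mult_left_mono) auto
    thus "phi j * \<bar>f j - k j\<bar> powr p \<le> 2 powr p * (phi j * \<bar>f j - g j\<bar> powr p) + 2 powr p * (phi j * \<bar>g j - k j\<bar> powr p)"
      by (simp add: algebra_simps)
  qed
  also have "\<dots> = 2 powr p * (D f g + D g k)"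
    unfolding D_def using summ_diff assms
    by (subst infsum_add) (auto intro!: summable_on_cmult_right simp: infsum_cmult_right distrib_left)
  finally show ?thesis .
qed

lemma term_le_D:
  assumes "f \<in> X" "g \<in> X" "j \<in> Om"
  shows "phi j * \<bar>f j - g j\<bar> powr p \<le> D f g"
proof -
  have "sum (\<lambda>j. phi j * \<bar>f j - g j\<bar> powr p) {j} \<le> D f g"
    unfolding D_def using assms summ_diff
    by (intro finite_sum_le_infsum) (auto intro: term_nonneg)
  thus ?thesis by simp
qed

lemma coord_le_D:
  assumes "f \<in> X" "g \<in> X" "j \<in> Om"
  shows "\<bar>f j - g j\<bar> powr p \<le> D f g"
proof -
  have "\<bar>f j - g j\<bar> powr p \<le> phi j * \<bar>f j - g j\<bar> powr p"
    using phi1 assms(3) by (intro mult_le_cancel_right1[THEN iffD2]) auto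
  thus ?thesis using term_le_D[OF assms] by linarith
qed

lemma coord_le_dist:
  assumes "f \<in> X" "g \<in> X" "j \<in> Om"
  shows "\<bar>f j - g j\<bar> \<le> D f g powr (1/p)"
proof -
  have "\<bar>f j - g j\<bar> = (\<bar>f j - g j\<bar> powr p) powr (1/p)"
    using p0 by (simp add: powr_powr)
  also have "\<dots> \<le> D f g powr (1/p)"
    using coord_le_D[OF assms] p0 by (intro powr_mono2) auto
  finally show ?thesis .
qed

lemma D_pos:
  assumes "f \<in> X" "g \<in> X" "f \<noteq> g"
  shows "0 < D f g"
proof -
  obtain j where j: "f j \<noteq> g j" using assms(3) by auto
  have jO: "j \<in> Om" using j assms(1,2) unfolding memX by metis
  have "0 < phi j * \<bar>f j - g j\<bar> powr p" using j phi0[OF jO] by simp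
  thus ?thesis using term_le_D[OF assms(1,2) jO] by linarith
qed

lemma dist_eq: "lp_dist Om phi p f g = D f g powr (1/p)"
  unfolding lp_dist_def D_def by simp

lemma memX_by:
  assumes "\<forall>j. j \<notin> Om \<longrightarrow> f j = 0" "g \<in> X"
    and "(\<lambda>j. phi j * \<bar>f j - g j\<bar> powr p) summable_on Om"
  shows "f \<in> X"
  unfolding memX
proof (intro conjI)
  show "\<forall>j. j \<notin> Om \<longrightarrow> f j = 0" using assms(1) .
  show "(\<lambda>j. phi j * \<bar>f j\<bar> powr p) summable_on Om"
  proof (rule summable_on_comparison_test)
    show "(\<lambda>j. 2 powr p * (phi j * \<bar>f j - g j\<bar> powr p) + 2 powr p * (phi j * \<bar>g j\<bar> powr p)) summable_on Om"
      using assms by (intro summable_on_add summable_on_cmult_right) (auto simp: memX)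
  next
    fix j assume j: "j \<in> Om"
    have "\<bar>(f j - g j) + g j\<bar> powr p \<le> 2 powr p * (\<bar>f j - g j\<bar> powr p + \<bar>g j\<bar> powr p)"
      using powr_sum_le[of p "f j - g j" "g j"] p0 by simp
    hence "phi j * \<bar>f j\<bar> powr p \<le> phi j * (2 powr p * (\<bar>f j - g j\<bar> powr p + \<bar>g j\<bar> powr p))"
      using phi0[OF j] by (intro mult_left_mono) auto
    thus "phi j * \<bar>f j\<bar> powr p \<le> 2 powr p * (phi j * \<bar>f j - g j\<bar> powr p) + 2 powr p * (phi j * \<bar>g j\<bar> powr p)"
      by (simp add: algebra_simps)
    show "0 \<le> phi j * \<bar>f j\<bar> powr p" using phi0[OF j] by simp
  qed
qed

end

context LP begin

lemma limit_point:
  assumes cX: "\<And>k. c k \<in> X" and rpos: "\<And>k. 0 < r k" and r0: "\<And>e. e > 0 \<Longrightarrow> \<exists>k. r k < e"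
    and nest: "\<And>k m. k \<le> m \<Longrightarrow> D (c k) (c m) \<le> r k"
  shows "\<exists>x\<in>X. (\<forall>k. D (c k) x \<le> r k) \<and> (\<forall>j. (\<lambda>m. c m j) \<longlonglongrightarrow> x j)"
proof -
  have cb: "\<bar>c k j - c m j\<bar> \<le> r k powr (1/p)" if "k \<le> m" for k m j
  proof (cases "j \<in> Om")
    case True
    have "\<bar>c k j - c m j\<bar> \<le> D (c k) (c m) powr (1/p)" by (rule coord_le_dist[OF cX cX True])
    also have "\<dots> \<le> r k powr (1/p)" using nest[OF that] D_nonneg p0 by (intro powr_mono2) auto
    finally show ?thesis .
  next
    case False
    then show ?thesis using cX[of k] cX[of m] by (auto simp: memX)
  qed
  have conv: "convergent (\<lambda>m. c m j)" for j
    unfolding Cauchy_convergent_iff[symmetric]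
  proof (rule CauchyI)
    fix e :: real assume e: "0 < e"
    obtain k where k: "r k < (e/2) powr p" using r0[of "(e/2) powr p"] e by auto
    have "r k powr (1/p) < ((e/2) powr p) powr (1/p)"
      using k rpos[of k] p0 by (intro powr_less_mono2) auto
    also have "\<dots> = e/2" using e p0 by (simp add: powr_powr)
    finally have rk: "r k powr (1/p) < e/2" .
    show "\<exists>M. \<forall>m\<ge>M. \<forall>n\<ge>M. norm (c m j - c n j) < e"
    proof (intro exI allI impI)
      fix m n assume "k \<le> m" "k \<le> n"
      then have "\<bar>c k j - c m j\<bar> \<le> r k powr (1/p)" "\<bar>c k j - c n j\<bar> \<le> r k powr (1/p)"
        using cb by auto
      then have "\<bar>c m j - c n j\<bar> < e" using rk by arith
      then show "norm (c m j - c n j) < e" by simp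
    qed
  qed
  define x where "x j = lim (\<lambda>m. c m j)" for j
  have lim: "(\<lambda>m. c m j) \<longlonglongrightarrow> x j" for j
    using conv[of j] unfolding x_def by (simp add: convergent_LIMSEQ_iff)
  have x0: "\<forall>j. j \<notin> Om \<longrightarrow> x j = 0"
  proof (intro allI impI)
    fix j assume "j \<notin> Om"
    then have "(\<lambda>m. c m j) = (\<lambda>m. 0)" using cX by (auto simp: memX)
    then have "(\<lambda>m. (0::real)) \<longlonglongrightarrow> x j" using lim[of j] by simp
    then show "x j = 0" by (simp add: LIMSEQ_const_iff)
  qed
  have fin: "sum (\<lambda>j. phi j * \<bar>c k j - x j\<bar> powr p) F \<le> r k" if F: "finite F" "F \<subseteq> Om" for k F
  proof -
    have "(\<lambda>m. sum (\<lambda>j. phi j * \<bar>c k j - c m j\<bar> powr p) F) \<longlonglongrightarrow> sum (\<lambda>j. phi j * \<bar>c k j - x j\<bar> powr p) F"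
    proof (rule tendsto_sum)
      fix j assume "j \<in> F"
      have "(\<lambda>m. \<bar>c k j - c m j\<bar>) \<longlonglongrightarrow> \<bar>c k j - x j\<bar>"
        by (rule tendsto_rabs, rule tendsto_diff, rule tendsto_const, rule lim)
      then have "(\<lambda>m. \<bar>c k j - c m j\<bar> powr p) \<longlonglongrightarrow> \<bar>c k j - x j\<bar> powr p"
        using p0 by (intro tendsto_powr2) auto
      then show "(\<lambda>m. phi j * \<bar>c k j - c m j\<bar> powr p) \<longlonglongrightarrow> phi j * \<bar>c k j - x j\<bar> powr p"
        by (rule tendsto_mult_left)
    qed
    moreover have "\<forall>m\<ge>k. sum (\<lambda>j. phi j * \<bar>c k j - c m j\<bar> powr p) F \<le> r k"
    proof (intro allI impI)
      fix m assume "k \<le> m"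
      have "sum (\<lambda>j. phi j * \<bar>c k j - c m j\<bar> powr p) F \<le> D (c k) (c m)"
        unfolding D_def using F summ_diff[OF cX cX] by (intro finite_sum_le_infsum) (auto intro: term_nonneg)
      then show "sum (\<lambda>j. phi j * \<bar>c k j - c m j\<bar> powr p) F \<le> r k" using nest[OF \<open>k \<le> m\<close>] by linarith
    qed
    ultimately show ?thesis by (intro LIMSEQ_le_const2) auto
  qed
  have summ: "(\<lambda>j. phi j * \<bar>c k j - x j\<bar> powr p) summable_on Om" for k
  proof (rule nonneg_bdd_above_summable_on)
    show "bdd_above (sum (\<lambda>j. phi j * \<bar>c k j - x j\<bar> powr p) ` {F. F \<subseteq> Om \<and> finite F})"
      by (rule bdd_aboveI2[where M="r k"]) (use fin in blast)
  qed (rule term_nonneg)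
  have Dle: "D (c k) x \<le> r k" for k
    unfolding D_def using summ fin by (intro infsum_le_finite_sums) auto
  have xX: "x \<in> X"
  proof (rule memX_by[OF x0 cX[of 0]])
    show "(\<lambda>j. phi j * \<bar>x j - c 0 j\<bar> powr p) summable_on Om"
      using summ[of 0] by (simp add: abs_minus_commute)
  qed
  show ?thesis using xX Dle lim by blast
qed

lemma tail_small:
  fixes f :: "'a \<Rightarrow> real"
  assumes "f summable_on Om" "\<And>j. j \<in> Om \<Longrightarrow> 0 \<le> f j" "e > 0"
  shows "\<exists>H. finite H \<and> H \<subseteq> Om \<and> infsum f (Om - H) \<le> e"
proof -
  obtain H where H: "finite H" "H \<subseteq> Om" "dist (sum f H) (infsum f Om) \<le> e"
    using infsum_finite_approximation[OF assms(1) assms(3)] by blast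
  have "infsum f (Om - H) = infsum f Om - infsum f H"
    using H assms(1) by (intro infsum_Diff) auto
  also have "\<dots> = infsum f Om - sum f H" using H by simp
  finally show ?thesis using H by (auto simp: dist_real_def)
qed

end

definition adj :: "real \<Rightarrow> real \<Rightarrow> real" where
  "adj t s = (if 0 \<le> t then max t s else min t (- s))"

lemma adj_abs: "0 \<le> s \<Longrightarrow> \<bar>adj t s\<bar> = max \<bar>t\<bar> s"
  unfolding adj_def by auto

lemma adj_diff: "0 \<le> s \<Longrightarrow> \<bar>adj t s - t\<bar> = max 0 (s - \<bar>t\<bar>)"
  unfolding adj_def by auto

context LP begin

lemma summable_split:
  fixes f :: "'a \<Rightarrow> real"
  assumes "finite H" "f summable_on (Om - H)"
  shows "f summable_on Om"
proof -
  have "f summable_on (H \<union> (Om - H))" using assms by (intro summable_on_union) auto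
  then show ?thesis by (rule summable_on_subset) auto
qed

lemma tri2:
  assumes "a \<in> X" "b \<in> X" "c \<in> X" "D a b \<le> M" "D b c \<le> M"
  shows "D a c \<le> (2 * 2 powr p) * M"
proof -
  have "D a c \<le> 2 powr p * (D a b + D b c)" by (rule D_quasi[OF assms(1-3)])
  also have "\<dots> \<le> 2 powr p * (M + M)" using assms(4,5) by (intro mult_left_mono) auto
  finally show ?thesis by simp
qed

lemma Kge: "2 \<le> 2 powr p"
proof -
  have "2 powr 1 \<le> 2 powr p" using p1 by (intro powr_mono) auto
  thus ?thesis by simp
qed

lemma step:
  fixes lam :: real and A :: "('a \<Rightarrow> real) set"
  assumes lam: "0 < lam" "lam < 1" and por: "porous X (lp_dist Om phi p) lam A"
    and h0: "\<forall>j\<in>Om. 0 \<le> h j" and hsum: "(\<lambda>j. phi j * h j powr p) summable_on Om"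
    and c: "c \<in> CC h" and r: "0 < r"
  shows "\<exists>h' c' r'. (\<forall>j\<in>Om. h j \<le> h' j) \<and> (\<lambda>j. phi j * h' j powr p) summable_on Om \<and>
     c' \<in> CC h' \<and> 0 < r' \<and> r' \<le> r/4 \<and> (\<forall>w\<in>X. D c' w \<le> r' \<longrightarrow> D c w \<le> r) \<and>
     (\<forall>w\<in>CC h'. D c' w \<le> r' \<longrightarrow> w \<notin> A)"
proof -
  define Q where "Q = 2 powr p"
  define K where "K = 2 * Q"
  have Q2: "2 \<le> Q" unfolding Q_def by (rule Kge)
  have K4: "4 \<le> K" using Q2 unfolding K_def by simp
  have K1: "1 \<le> K" using K4 by simp
  have KM: "\<And>M. 0 \<le> M \<Longrightarrow> M \<le> K * M" using K1 by (simp add: mult_le_cancel_right1)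
  define th where "th = lam / 4"
  have th: "0 < th" "th \<le> 1" using lam unfolding th_def by auto
  define R where "R = r / K^4"
  have K4pos: "0 < K^4" using K1 by simp
  have Rpos: "0 < R" unfolding R_def using r K4pos by simp
  have KR: "K * (K * (K * (K * R))) = r" unfolding R_def using K4pos K1 by (simp add: power4_eq_xxxx)
  have "(4::real) \<le> K^4"
  proof -
    have "(4::real) \<le> 4^4" by simp
    also have "\<dots> \<le> K^4" using K4 by (intro power_mono) auto
    finally show ?thesis .
  qed
  hence R4: "R \<le> r/4" unfolding R_def using r K4pos by (simp add: field_simps)
  have cX: "c \<in> X" and ch: "\<forall>j\<in>Om. h j \<le> \<bar>c j\<bar>" using c unfolding CC_def by auto
  have thp: "0 < th powr p" using th by simp
  obtain H where H: "finite H" "H \<subseteq> Om"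
    and tail: "infsum (\<lambda>j. phi j * h j powr p) (Om - H) \<le> th powr p * R / 2"
    using tail_small[OF hsum term_nonneg, of "th powr p * R / 2"] thp Rpos by auto
  define S where "S = sum phi H"
  have S0: "0 \<le> S" unfolding S_def using H phi0 by (intro sum_nonneg) (auto intro: less_imp_le)
  define m where "m = min 1 (R / (2 * (1 + S)))"
  have m0: "0 < m" "m \<le> 1" unfolding m_def using Rpos S0 by auto
  have mS: "m * S \<le> R/2"
  proof -
    have "m * S \<le> R / (2 * (1 + S)) * S" unfolding m_def using S0 by (intro mult_right_mono) auto
    also have "\<dots> = (R/2) * (S / (1 + S))" by (simp add: field_simps)
    also have "\<dots> \<le> (R/2) * 1" using Rpos S0 by (intro mult_left_mono) auto
    finally show ?thesis by simp
  qed
  define hh where "hh j = (if j \<in> H then h j + m else h j / th)" for j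
  have hle: "\<forall>j\<in>Om. h j \<le> hh j"
  proof
    fix j assume j: "j \<in> Om"
    show "h j \<le> hh j"
    proof (cases "j \<in> H")
      case False
      have "h j * 1 \<le> h j * (1 / th)" using h0 j th by (intro mult_left_mono) auto
      then show ?thesis using False unfolding hh_def by simp
    qed (use m0 in \<open>auto simp: hh_def\<close>)
  qed
  have hh0: "0 \<le> hh j" if "j \<in> Om" for j
  proof -
    have "0 \<le> h j" "h j \<le> hh j" using that h0 hle by auto
    then show ?thesis by linarith
  qed
  define cs where "cs j = (if j \<in> Om then adj (c j) (hh j) else 0)" for j
  define b where "b j = (if j \<in> H then phi j * m else inverse (th powr p) * (phi j * h j powr p))" for j
  have bt: "b summable_on (Om - H)"
  proof -
    have "(\<lambda>j. inverse (th powr p) * (phi j * h j powr p)) summable_on (Om - H)"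
      by (rule summable_on_cmult_right, rule summable_on_subset[OF hsum]) auto
    moreover have "b summable_on (Om - H) \<longleftrightarrow> (\<lambda>j. inverse (th powr p) * (phi j * h j powr p)) summable_on (Om - H)"
      by (rule summable_on_cong) (simp add: b_def)
    ultimately show ?thesis by simp
  qed
  have bs: "b summable_on Om" using summable_split[OF H(1) bt] .
  have binf: "infsum b Om \<le> R"
  proof -
    have "infsum b (Om - H) = infsum b Om - infsum b H"
      using bs H by (intro infsum_Diff) auto
    moreover have "infsum b H = m * S"
      using H(1) unfolding S_def b_def by (simp add: sum_distrib_left mult.commute)
    moreover have "infsum b (Om - H) = inverse (th powr p) * infsum (\<lambda>j. phi j * h j powr p) (Om - H)"
    proof -
      have "infsum b (Om - H) = infsum (\<lambda>j. inverse (th powr p) * (phi j * h j powr p)) (Om - H)"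
        by (rule infsum_cong) (simp add: b_def)
      also have "\<dots> = inverse (th powr p) * infsum (\<lambda>j. phi j * h j powr p) (Om - H)"
        by (rule infsum_cmult_right) (use hsum in \<open>auto intro: summable_on_subset\<close>)
      finally show ?thesis .
    qed
    moreover have "inverse (th powr p) * infsum (\<lambda>j. phi j * h j powr p) (Om - H) \<le> inverse (th powr p) * (th powr p * R / 2)"
      using tail thp by (intro mult_left_mono) auto
    moreover have "inverse (th powr p) * (th powr p * R / 2) = R/2" using thp by simp
    ultimately show ?thesis using mS by linarith
  qed
  have cs_pt: "phi j * \<bar>cs j - c j\<bar> powr p \<le> b j" if j: "j \<in> Om" for j
  proof -
    have d: "\<bar>cs j - c j\<bar> = max 0 (hh j - \<bar>c j\<bar>)" using adj_diff[OF hh0[OF j]] j unfolding cs_def by simp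
    have pj: "0 < phi j" using phi0 j by simp
    show ?thesis
    proof (cases "j \<in> H")
      case True
      have "\<bar>cs j - c j\<bar> \<le> m" using d ch j True m0 unfolding hh_def by auto
      hence "\<bar>cs j - c j\<bar> powr p \<le> m powr p" using p0 by (intro powr_mono2) auto
      also have "\<dots> \<le> m" using m0 p1 by (intro powr_le_one_le) auto
      finally show ?thesis using True pj unfolding b_def by (simp add: mult_left_mono)
    next
      case False
      have "\<bar>cs j - c j\<bar> \<le> h j / th" using d ch j False h0 th unfolding hh_def by auto
      hence "\<bar>cs j - c j\<bar> powr p \<le> (h j / th) powr p" using p0 by (intro powr_mono2) auto
      also have "\<dots> = inverse (th powr p) * h j powr p" by (simp add: powr_divide field_simps)
      finally have "phi j * \<bar>cs j - c j\<bar> powr p \<le> phi j * (inverse (th powr p) * h j powr p)"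
        using pj by (intro mult_left_mono) auto
      then show ?thesis using False unfolding b_def by (simp add: algebra_simps)
    qed
  qed
  have csd: "(\<lambda>j. phi j * \<bar>cs j - c j\<bar> powr p) summable_on Om"
    by (rule summable_on_comparison_test[OF bs cs_pt]) (auto intro: term_nonneg)
  have csX: "cs \<in> X"
    by (rule memX_by[OF _ cX csd]) (simp add: cs_def)
  have csC: "cs \<in> CC hh"
    using csX hh0 unfolding CC_def cs_def by (auto simp: adj_abs)
  have hhs: "(\<lambda>j. phi j * hh j powr p) summable_on Om"
  proof (rule summable_split[OF H(1)])
    have "(\<lambda>j. inverse (th powr p) * (phi j * h j powr p)) summable_on (Om - H)"
      by (rule summable_on_cmult_right, rule summable_on_subset[OF hsum]) auto
    moreover have "(\<lambda>j. phi j * hh j powr p) summable_on (Om - H) \<longleftrightarrow> (\<lambda>j. inverse (th powr p) * (phi j * h j powr p)) summable_on (Om - H)"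
      by (rule summable_on_cong) (simp add: hh_def powr_divide field_simps)
    ultimately show "(\<lambda>j. phi j * hh j powr p) summable_on (Om - H)" by simp
  qed
  have Dccs: "D c cs \<le> R"
  proof -
    have "D c cs \<le> infsum b Om" unfolding D_def
      using cs_pt csd bs by (intro infsum_mono) (auto simp: abs_minus_commute)
    then show ?thesis using binf by linarith
  qed
  show ?thesis
  proof (cases "\<forall>w\<in>CC hh. D cs w \<le> R \<longrightarrow> w \<notin> A")
    case True
    have nest: "\<forall>w\<in>X. D cs w \<le> R \<longrightarrow> D c w \<le> r"
    proof (intro ballI impI)
      fix w assume w: "w \<in> X" "D cs w \<le> R"
      have "D c w \<le> K * R" using tri2[OF cX csX w(1) Dccs w(2)] unfolding K_def Q_def .
      also have "\<dots> \<le> K * (K * (K * (K * R)))"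
        using KM Rpos K1 by (smt (verit) mult_left_mono mult_nonneg_nonneg)
      finally show "D c w \<le> r" using KR by simp
    qed
    show ?thesis
      by (rule exI[of _ hh], rule exI[of _ cs], rule exI[of _ R]) (use True hle hhs csC Rpos R4 nest in blast)
  next
    case False
    then obtain x where xC: "x \<in> CC hh" and xD: "D cs x \<le> R" and xA: "x \<in> A" by auto
    have xX: "x \<in> X" and xh: "\<forall>j\<in>Om. hh j \<le> \<bar>x j\<bar>" using xC unfolding CC_def by auto
    have pa: "porous_at X (lp_dist Om phi p) lam A x" using por xA unfolding porous_def by auto
    define del where "del = min m (R powr (1/p))"
    have del0: "0 < del" unfolding del_def using m0 Rpos by simp
    obtain y where yX: "y \<in> X" and dxy: "lp_dist Om phi p x y < del" and yx: "y \<noteq> x"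
        and hole: "\<forall>z\<in>X. lp_dist Om phi p y z < lam * lp_dist Om phi p x y \<longrightarrow> z \<notin> A"
      using pa del0 unfolding porous_at_def by blast
    define ep where "ep = D x y"
    have ep0: "0 < ep" unfolding ep_def using D_pos[OF xX yX] yx by auto
    have dxy': "ep powr (1/p) < del" using dxy unfolding ep_def dist_eq .
    have epR: "ep < R"
    proof -
      have "ep powr (1/p) < R powr (1/p)" using dxy' unfolding del_def by simp
      then show ?thesis using powr_less_iff2[of "1/p" ep R] p0 ep0 Rpos by simp
    qed
    have coord: "\<bar>x j - y j\<bar> < m" if "j \<in> Om" for j
      using coord_le_dist[OF xX yX that] dxy' unfolding ep_def del_def by simp
    define z where "z j = (if j \<in> Om then adj (y j) (h j) else 0)" for j
    have zpt: "\<bar>z j - y j\<bar> \<le> th * \<bar>x j - y j\<bar>" if j: "j \<in> Om" for j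
    proof -
      have zy: "\<bar>z j - y j\<bar> = max 0 (h j - \<bar>y j\<bar>)" using adj_diff h0 j unfolding z_def by simp
      show ?thesis
      proof (cases "h j \<le> \<bar>y j\<bar>")
        case True
        then show ?thesis using zy th by simp
      next
        case False
        show ?thesis
        proof (cases "j \<in> H")
          case True
          have "h j + m \<le> \<bar>x j\<bar>" using xh j True unfolding hh_def by auto
          then have "h j < \<bar>y j\<bar>" using coord[OF j] by linarith
          then show ?thesis using False by simp
        next
          case nH: False
          have "h j / th \<le> \<bar>x j\<bar>" using xh j nH unfolding hh_def by auto
          then have hx: "h j \<le> th * \<bar>x j\<bar>" using th by (simp add: field_simps)
          have "th * (\<bar>x j\<bar> - \<bar>y j\<bar>) \<le> th * \<bar>x j - y j\<bar>" using th by (intro mult_left_mono) auto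
          moreover have "th * \<bar>y j\<bar> \<le> \<bar>y j\<bar>" using th by (simp add: mult_left_le_one_le)
          moreover have "0 \<le> th * \<bar>x j - y j\<bar>" using th by simp
          ultimately show ?thesis using zy hx by (auto simp: algebra_simps)
        qed
      qed
    qed
    have zpt2: "phi j * \<bar>y j - z j\<bar> powr p \<le> th powr p * (phi j * \<bar>x j - y j\<bar> powr p)" if j: "j \<in> Om" for j
    proof -
      have "\<bar>y j - z j\<bar> powr p \<le> (th * \<bar>x j - y j\<bar>) powr p"
        using zpt[OF j] p0 by (intro powr_mono2) (auto simp: abs_minus_commute)
      also have "\<dots> = th powr p * \<bar>x j - y j\<bar> powr p" by (simp add: powr_mult)
      finally show ?thesis using phi0[OF j] by (simp add: mult_left_mono algebra_simps)
    qed
    have xys: "(\<lambda>j. th powr p * (phi j * \<bar>x j - y j\<bar> powr p)) summable_on Om"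
      using summ_diff[OF xX yX] by (rule summable_on_cmult_right)
    have yzs: "(\<lambda>j. phi j * \<bar>y j - z j\<bar> powr p) summable_on Om"
      by (rule summable_on_comparison_test[OF xys zpt2]) (auto intro: term_nonneg)
    have zX: "z \<in> X"
      by (rule memX_by[OF _ yX]) (use yzs in \<open>auto simp: z_def abs_minus_commute\<close>)
    have zC: "z \<in> CC h" using zX h0 unfolding CC_def z_def by (auto simp: adj_abs)
    have Dyz: "D y z \<le> th powr p * ep"
    proof -
      have "D y z \<le> infsum (\<lambda>j. th powr p * (phi j * \<bar>x j - y j\<bar> powr p)) Om"
        unfolding D_def using yzs xys zpt2 by (intro infsum_mono) auto
      also have "\<dots> = th powr p * ep" unfolding ep_def D_def
        using summ_diff[OF xX yX] by (intro infsum_cmult_right) auto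
      finally show ?thesis .
    qed
    have thp1: "th powr p \<le> 1" using th p0 by (intro powr_le1) auto
    have lp0: "0 < lam powr p" using lam by simp
    have lp1: "lam powr p \<le> 1" using lam p0 by (intro powr_le1) auto
    define rho where "rho = lam powr p * ep / (4 * Q)"
    have rho0: "0 < rho" unfolding rho_def using lp0 ep0 Q2 by simp
    have rhoep: "rho \<le> ep"
    proof -
      have "rho = (lam powr p / (4 * Q)) * ep" unfolding rho_def by simp
      also have "\<dots> \<le> 1 * ep" using lp1 Q2 ep0 by (intro mult_right_mono) (auto simp: field_simps)
      finally show ?thesis by simp
    qed
    have "th powr p * ep \<le> 1 * ep" using thp1 ep0 by (intro mult_right_mono) auto
    then have Dyz2: "D y z \<le> R" using Dyz epR by linarith
    have DxyR: "D x y \<le> R" using epR unfolding ep_def by simp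
    have r4: "rho \<le> r / 4" using rhoep epR R4 by simp
    have holeA: "\<forall>w\<in>CC h. D z w \<le> rho \<longrightarrow> w \<notin> A"
    proof (intro ballI impI)
      fix w assume w: "w \<in> CC h" "D z w \<le> rho"
      have wX: "w \<in> X" using w unfolding CC_def by auto
      have "D y w \<le> Q * (D y z + D z w)" using D_quasi[OF yX zX wX] unfolding Q_def .
      also have "\<dots> \<le> Q * (th powr p * ep + rho)" using Dyz w(2) Q2 by (intro mult_left_mono) auto
      also have "\<dots> = Q * th powr p * ep + lam powr p * ep / 4" unfolding rho_def using Q2 by (simp add: field_simps)
      also have "Q * th powr p = lam powr p / Q"
      proof -
        have "Q * th powr p = (2 * th) powr p" unfolding Q_def by (simp add: powr_mult)
        also have "2 * th = lam / 2" unfolding th_def by simp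
        also have "(lam / 2) powr p = lam powr p / Q" unfolding Q_def by (simp add: powr_divide)
        finally show ?thesis .
      qed
      also have "lam powr p / Q * ep + lam powr p * ep / 4 < lam powr p * ep"
      proof -
        have "lam powr p / Q * ep \<le> lam powr p / 2 * ep"
          using Q2 lp0 ep0 by (intro mult_right_mono divide_left_mono) auto
        moreover have "lam powr p / 2 * ep = (lam powr p * ep) / 2" by simp
        moreover have "0 < lam powr p * ep" using lp0 ep0 by simp
        ultimately show ?thesis by linarith
      qed
      finally have Dyw: "D y w < lam powr p * ep" .
      have "lp_dist Om phi p y w = D y w powr (1/p)" by (rule dist_eq)
      also have "\<dots> < (lam powr p * ep) powr (1/p)"
        using Dyw D_nonneg p0 by (intro powr_less_mono2) auto
      also have "\<dots> = lam * lp_dist Om phi p x y"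
        using lam p0 ep0 unfolding dist_eq ep_def[symmetric] by (simp add: powr_mult powr_powr)
      finally show "w \<notin> A" using hole wX by blast
    qed
    have nest: "\<forall>w\<in>X. D z w \<le> rho \<longrightarrow> D c w \<le> r"
    proof (intro ballI impI)
      fix w assume w: "w \<in> X" "D z w \<le> rho"
      have R0: "0 \<le> R" using Rpos by simp
      have m1: "D x z \<le> K * R" using tri2[OF xX yX zX DxyR Dyz2] unfolding K_def Q_def .
      have m2: "D cs z \<le> K * (K * R)"
        using tri2[OF csX xX zX, of "K * R"] xD m1 KM[OF R0] unfolding K_def Q_def by linarith
      have KR0: "0 \<le> K * R" using K1 R0 by simp
      have m3: "D c z \<le> K * (K * (K * R))"
        using tri2[OF cX csX zX, of "K * (K * R)"] Dccs m2 KM[OF R0] KM[OF KR0] unfolding K_def Q_def by linarith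
      have KKR0: "0 \<le> K * (K * R)" using K1 KR0 by simp
      have KKKR0: "0 \<le> K * (K * (K * R))" using K1 KKR0 by simp
      have "D z w \<le> K * (K * (K * R))"
        using w(2) rhoep epR KM[OF R0] KM[OF KR0] KM[OF KKR0] by linarith
      then have "D c w \<le> K * (K * (K * (K * R)))"
        using tri2[OF cX zX w(1), of "K * (K * (K * R))"] m3 unfolding K_def Q_def by linarith
      then show "D c w \<le> r" using KR by simp
    qed
    show ?thesis
      by (rule exI[of _ h], rule exI[of _ z], rule exI[of _ rho]) (use h0 hsum zC rho0 r4 holeA nest in auto)
  qed
qed

end

context LP begin

lemma main:
  fixes lam :: real and g :: "'a \<Rightarrow> real"
  assumes lam: "0 < lam" "lam < 1" and gX: "g \<in> X"
  shows "\<not> sigma_porous X (lp_dist Om phi p) lam {f \<in> X. \<forall>j\<in>Om. \<bar>f j\<bar> \<ge> \<bar>g j\<bar>}"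
proof
  assume "sigma_porous X (lp_dist Om phi p) lam {f \<in> X. \<forall>j\<in>Om. \<bar>f j\<bar> \<ge> \<bar>g j\<bar>}"
  then have ex0: "\<exists>A. {f \<in> X. \<forall>j\<in>Om. \<bar>f j\<bar> \<ge> \<bar>g j\<bar>} = (\<Union>n::nat. A n)
      \<and> (\<forall>n::nat. porous X (lp_dist Om phi p) lam (A n))"
    by (simp only: sigma_porous_def)
  define A where "A = (SOME A. {f \<in> X. \<forall>j\<in>Om. \<bar>f j\<bar> \<ge> \<bar>g j\<bar>} = (\<Union>n::nat. A n)
      \<and> (\<forall>n::nat. porous X (lp_dist Om phi p) lam (A n)))"
  have EA: "{f \<in> X. \<forall>j\<in>Om. \<bar>f j\<bar> \<ge> \<bar>g j\<bar>} = (\<Union>n::nat. A n)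
      \<and> (\<forall>n::nat. porous X (lp_dist Om phi p) lam (A n))"
    unfolding A_def by (rule someI_ex[OF ex0])
  have E: "{f \<in> X. \<forall>j\<in>Om. \<bar>f j\<bar> \<ge> \<bar>g j\<bar>} = (\<Union>n::nat. A n)" using EA by (rule conjunct1)
  have por: "porous X (lp_dist Om phi p) lam (A n)" for n using conjunct2[OF EA] by (rule spec)
  define Inv where "Inv s \<longleftrightarrow> (\<forall>j\<in>Om. 0 \<le> fst s j) \<and> (\<lambda>j. phi j * fst s j powr p) summable_on Om
      \<and> fst (snd s) \<in> CC (fst s) \<and> 0 < snd (snd s)" for s :: "('a \<Rightarrow> real) \<times> ('a \<Rightarrow> real) \<times> real"
  define Rel where "Rel n s t \<longleftrightarrow> (\<forall>j\<in>Om. fst s j \<le> fst t j) \<and> (\<lambda>j. phi j * fst t j powr p) summable_on Om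
      \<and> fst (snd t) \<in> CC (fst t) \<and> 0 < snd (snd t) \<and> snd (snd t) \<le> snd (snd s) / 4
      \<and> (\<forall>w\<in>X. D (fst (snd t)) w \<le> snd (snd t) \<longrightarrow> D (fst (snd s)) w \<le> snd (snd s))
      \<and> (\<forall>w\<in>CC (fst t). D (fst (snd t)) w \<le> snd (snd t) \<longrightarrow> w \<notin> A n)"
    for n and s t :: "('a \<Rightarrow> real) \<times> ('a \<Rightarrow> real) \<times> real"
  have ex: "\<exists>t. Rel n s t" if "Inv s" for n s
  proof -
    obtain h c r where s: "s = (h, c, r)" by (cases s) auto
    have "\<exists>h' c' r'. (\<forall>j\<in>Om. h j \<le> h' j) \<and> (\<lambda>j. phi j * h' j powr p) summable_on Om \<and>
     c' \<in> CC h' \<and> 0 < r' \<and> r' \<le> r/4 \<and> (\<forall>w\<in>X. D c' w \<le> r' \<longrightarrow> D c w \<le> r) \<and>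
     (\<forall>w\<in>CC h'. D c' w \<le> r' \<longrightarrow> w \<notin> A n)"
      using that unfolding Inv_def s by (intro step[OF lam por]) auto
    then obtain h' c' r' where "(\<forall>j\<in>Om. h j \<le> h' j) \<and> (\<lambda>j. phi j * h' j powr p) summable_on Om \<and>
     c' \<in> CC h' \<and> 0 < r' \<and> r' \<le> r/4 \<and> (\<forall>w\<in>X. D c' w \<le> r' \<longrightarrow> D c w \<le> r) \<and>
     (\<forall>w\<in>CC h'. D c' w \<le> r' \<longrightarrow> w \<notin> A n)" by blast
    then have "Rel n s (h', c', r')" unfolding Rel_def s by simp
    then show ?thesis by blast
  qed
  have RI: "Inv t" if "Inv s" "Rel n s t" for n s t
  proof -
    have "\<forall>j\<in>Om. 0 \<le> fst t j"
    proof
      fix j assume "j \<in> Om"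
      then have "0 \<le> fst s j" "fst s j \<le> fst t j" using that unfolding Inv_def Rel_def by auto
      then show "0 \<le> fst t j" by linarith
    qed
    then show ?thesis using that(2) unfolding Inv_def Rel_def by auto
  qed
  define S where "S = rec_nat ((\<lambda>j. \<bar>g j\<bar>), g, 1) (\<lambda>n s. SOME t. Rel n s t)"
  have S0: "S 0 = ((\<lambda>j. \<bar>g j\<bar>), g, 1)" unfolding S_def by simp
  have SS: "S (Suc n) = (SOME t. Rel n (S n) t)" for n unfolding S_def by simp
  have inv0: "Inv (S 0)"
    unfolding Inv_def S0 CC_def using gX by (auto simp: memX)
  have IR: "Inv (S n) \<and> Rel n (S n) (S (Suc n))" for n
  proof (induction n)
    case 0
    have "Rel 0 (S 0) (S (Suc 0))" unfolding SS using ex[OF inv0] by (rule someI_ex)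
    then show ?case using inv0 by simp
  next
    case (Suc n)
    then have i: "Inv (S (Suc n))" using RI by blast
    have "Rel (Suc n) (S (Suc n)) (S (Suc (Suc n)))" unfolding SS[of "Suc n"] using ex[OF i] by (rule someI_ex)
    then show ?case using i by simp
  qed
  define h where "h n = fst (S n)" for n
  define c where "c n = fst (snd (S n))" for n
  define r where "r n = snd (snd (S n))" for n
  have rpos: "0 < r n" for n using IR[of n] unfolding Inv_def r_def by auto
  have cC: "c n \<in> CC (h n)" for n using IR[of n] unfolding Inv_def c_def h_def by auto
  have cX: "c n \<in> X" for n using cC[of n] unfolding CC_def by auto
  have rstep: "r (Suc n) \<le> r n / 4" for n using IR[of n] unfolding Rel_def r_def by auto
  have hstep: "\<forall>j\<in>Om. h n j \<le> h (Suc n) j" for n using IR[of n] unfolding Rel_def h_def by auto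
  have bstep: "\<forall>w\<in>X. D (c (Suc n)) w \<le> r (Suc n) \<longrightarrow> D (c n) w \<le> r n" for n
    using IR[of n] unfolding Rel_def c_def r_def by auto
  have hole: "\<forall>w\<in>CC (h (Suc n)). D (c (Suc n)) w \<le> r (Suc n) \<longrightarrow> w \<notin> A n" for n
    using IR[of n] unfolding Rel_def c_def r_def h_def by auto
  have rbound: "r n \<le> r 0 * (1/4)^n" for n
  proof (induction n)
    case (Suc n)
    then show ?case using rstep[of n] by simp
  qed simp
  have r0: "\<exists>k. r k < e" if "e > 0" for e
  proof -
    have "0 < e / r 0" using \<open>e > 0\<close> rpos[of 0] by simp
    then obtain k where "(1/4::real)^k < e / r 0" using real_arch_pow_inv[of "e / r 0" "1/4"] by auto
    then have "r 0 * (1/4)^k < e" using rpos[of 0] by (simp add: field_simps)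
    then have "r k < e" using rbound[of k] by linarith
    then show ?thesis by blast
  qed
  have ball: "\<forall>w\<in>X. D (c m) w \<le> r m \<longrightarrow> D (c k) w \<le> r k" if "k \<le> m" for k m
    using that
  proof (induction m rule: dec_induct)
    case (step m)
    then show ?case using bstep[of m] by blast
  qed simp
  have nest: "D (c k) (c m) \<le> r k" if "k \<le> m" for k m
    using ball[OF that] cX[of m] rpos[of m] by (auto simp: D_self)
  have hmono: "\<forall>j\<in>Om. h k j \<le> h m j" if "k \<le> m" for k m
    using that
  proof (induction m rule: dec_induct)
    case (step m)
    then show ?case using hstep[of m] by force
  qed simp
  obtain x where xX: "x \<in> X" and xD: "\<forall>k. D (c k) x \<le> r k" and xl: "\<forall>j. (\<lambda>m. c m j) \<longlonglongrightarrow> x j"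
    using limit_point[OF cX rpos r0 nest] by blast
  have xC: "x \<in> CC (h k)" for k
    unfolding CC_def
  proof (intro CollectI conjI ballI xX)
    fix j assume j: "j \<in> Om"
    have "(\<lambda>m. \<bar>c m j\<bar>) \<longlonglongrightarrow> \<bar>x j\<bar>" using xl by (intro tendsto_rabs) auto
    moreover have "\<forall>m\<ge>k. h k j \<le> \<bar>c m j\<bar>"
    proof (intro allI impI)
      fix m assume "k \<le> m"
      then have "h k j \<le> h m j" using hmono j by blast
      moreover have "h m j \<le> \<bar>c m j\<bar>" using cC[of m] j unfolding CC_def by auto
      ultimately show "h k j \<le> \<bar>c m j\<bar>" by linarith
    qed
    ultimately show "h k j \<le> \<bar>x j\<bar>" by (intro LIMSEQ_le_const) auto
  qed
  have "x \<in> {f \<in> X. \<forall>j\<in>Om. \<bar>f j\<bar> \<ge> \<bar>g j\<bar>}"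
    using xC[of 0] unfolding CC_def h_def S0 by auto
  then obtain n where "x \<in> A n" using E by auto
  moreover have "x \<notin> A n" using hole[of n] xC[of "Suc n"] xD by blast
  ultimately show False by contradiction
qed

end

theorem corollary2p5:
  fixes \<Omega> :: "'a set" and \<phi> :: "'a \<Rightarrow> real" and p :: real and g :: "'a \<Rightarrow> real"
  assumes "p \<ge> 1"
    and "\<forall>j\<in>\<Omega>. \<phi> j \<ge> 1"
    and "g \<in> lp_space \<Omega> \<phi> p"
  shows "\<not> (\<exists>lam. 0 < lam \<and> lam < 1 \<and>
            sigma_porous (lp_space \<Omega> \<phi> p) (lp_dist \<Omega> \<phi> p) lam
              {f \<in> lp_space \<Omega> \<phi> p. \<forall>j\<in>\<Omega>. \<bar>f j\<bar> \<ge> \<bar>g j\<bar>})"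
proof -
  interpret LP \<Omega> \<phi> p using assms(1,2) by unfold_locales
  show ?thesis
  proof
    assume "\<exists>lam. 0 < lam \<and> lam < 1 \<and>
            sigma_porous (lp_space \<Omega> \<phi> p) (lp_dist \<Omega> \<phi> p) lam
              {f \<in> lp_space \<Omega> \<phi> p. \<forall>j\<in>\<Omega>. \<bar>f j\<bar> \<ge> \<bar>g j\<bar>}"
    then obtain lam where l: "0 < lam" "lam < 1" and sp: "sigma_porous (lp_space \<Omega> \<phi> p) (lp_dist \<Omega> \<phi> p) lam
              {f \<in> lp_space \<Omega> \<phi> p. \<forall>j\<in>\<Omega>. \<bar>f j\<bar> \<ge> \<bar>g j\<bar>}"
      by (elim exE conjE)
    show False using main[OF l assms(3)] sp by (rule notE)
  qed
qed

end
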